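(* For every integer $n\ge 1$ and every vertex $v$ of \[\mathrm{Newt}(U_n)=\sum_{1\le i<j\le n}\mathrm{conv}\{e_i+e_{n+j},\,e_j+e_{n+i}\}\subseteq\mathbb{R}^{2n},\] we have $v\in N_{\mathrm{Newt}(U_n)}(\{v\})$.
   Context: $e_1,\dots,e_{2n}$ are the standard basis vectors of $\mathbb{R}^{2n}$ and the sum is a Minkowski sum. For a polytope $P\subseteq\mathbb{R}^m$ and $a\in\mathbb{R}^m$, $\mathrm{face}_a(P)=\{x\in P: a\cdot y\le a\cdot x \text{ for all } y\in P\}$, and for a face $F$ of $P$ the normal cone is $N_P(F)=\{a\in\mathbb{R}^m:\mathrm{face}_a(P)=F\}$. *)

theory Defs
  imports Complex_Main
begin

text \<open>Points of R^m are represented as functions nat => real with coordinates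
indexed 1..m and all other coordinates zero.\<close>

definition Rsp :: "nat \<Rightarrow> (nat \<Rightarrow> real) set" where
  "Rsp m = {x. \<forall>k. (k < 1 \<or> m < k) \<longrightarrow> x k = 0}"

definition dotp :: "nat \<Rightarrow> (nat \<Rightarrow> real) \<Rightarrow> (nat \<Rightarrow> real) \<Rightarrow> real" where
  "dotp m a x = (\<Sum>k=1..m. a k * x k)"

definition ebas :: "nat \<Rightarrow> nat \<Rightarrow> real" where
  "ebas k = (\<lambda>i. if i = k then 1 else 0)"

definition seg :: "(nat \<Rightarrow> real) \<Rightarrow> (nat \<Rightarrow> real) \<Rightarrow> (nat \<Rightarrow> real) set" where
  "seg p q = {(\<lambda>k. (1 - t) * p k + t * q k) | t. 0 \<le> t \<and> t \<le> 1}"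

definition msum :: "'i set \<Rightarrow> ('i \<Rightarrow> (nat \<Rightarrow> real) set) \<Rightarrow> (nat \<Rightarrow> real) set" where
  "msum I S = {(\<lambda>k. \<Sum>i\<in>I. x i k) | x. \<forall>i\<in>I. x i \<in> S i}"

definition NewtU :: "nat \<Rightarrow> (nat \<Rightarrow> real) set" where
  "NewtU n = msum {(i, j). 1 \<le> i \<and> i < j \<and> j \<le> n}
     (\<lambda>(i, j). seg (\<lambda>k. ebas i k + ebas (n + j) k) (\<lambda>k. ebas j k + ebas (n + i) k))"

definition face_dir :: "nat \<Rightarrow> (nat \<Rightarrow> real) set \<Rightarrow> (nat \<Rightarrow> real) \<Rightarrow> (nat \<Rightarrow> real) set" where
  "face_dir m P a = {x \<in> P. \<forall>y \<in> P. dotp m a y \<le> dotp m a x}"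

definition normal_cone :: "nat \<Rightarrow> (nat \<Rightarrow> real) set \<Rightarrow> (nat \<Rightarrow> real) set \<Rightarrow> (nat \<Rightarrow> real) set" where
  "normal_cone m P F = {a \<in> Rsp m. face_dir m P a = F}"

definition is_vertex :: "nat \<Rightarrow> (nat \<Rightarrow> real) set \<Rightarrow> (nat \<Rightarrow> real) \<Rightarrow> bool" where
  "is_vertex m P v = (\<exists>a \<in> Rsp m. face_dir m P a = {v})"

end

theory Submission imports Defs begin

lemma dotp_sum: "finite I \<Longrightarrow> dotp m a (\<lambda>k. \<Sum>i\<in>I. x i k) = (\<Sum>i\<in>I. dotp m a (x i))"
  unfolding dotp_def by (simp add: sum_distrib_left sum.swap[of _ I])

lemma sum_upd: assumes "finite I" "i0 \<in> I"
  shows "(\<Sum>i\<in>I. (x(i0:=z)) i) = (\<Sum>i\<in>I. x i) - x i0 + (z::real)"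
proof -
  have "(\<Sum>i\<in>I. (x(i0:=z)) i) = (x(i0:=z)) i0 + (\<Sum>i\<in>I-{i0}. (x(i0:=z)) i)"
    using assms by (simp add: sum.remove)
  also have "(\<Sum>i\<in>I-{i0}. (x(i0:=z)) i) = (\<Sum>i\<in>I-{i0}. x i)" by (rule sum.cong) auto
  also have "(\<Sum>i\<in>I. x i) = x i0 + (\<Sum>i\<in>I-{i0}. x i)" using assms by (simp add: sum.remove)
  ultimately show ?thesis by simp
qed

lemma uniq_max:
  assumes fin: "finite I" and xS: "\<forall>i\<in>I. x i \<in> S i"
    and face: "face_dir m (msum I S) a = {(\<lambda>k. \<Sum>i\<in>I. x i k)}"
    and i0: "i0 \<in> I" and zS: "z \<in> S i0" and zne: "z \<noteq> x i0"
  shows "dotp m a z < dotp m a (x i0)"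
proof -
  let ?v = "\<lambda>k. \<Sum>i\<in>I. x i k"
  let ?x' = "x(i0:=z)"
  let ?y = "\<lambda>k. \<Sum>i\<in>I. ?x' i k"
  have yP: "?y \<in> msum I S" unfolding msum_def using xS zS by auto
  have "?v \<in> face_dir m (msum I S) a" using face by auto
  hence le: "dotp m a ?y \<le> dotp m a ?v" using yP unfolding face_dir_def by auto
  have dy: "dotp m a ?y = (\<Sum>i\<in>I. dotp m a (?x' i))" using fin by (rule dotp_sum)
  also have "\<dots> = (\<Sum>i\<in>I. ((\<lambda>i. dotp m a (x i))(i0 := dotp m a z)) i)"
    by (rule sum.cong) auto
  also have "\<dots> = (\<Sum>i\<in>I. dotp m a (x i)) - dotp m a (x i0) + dotp m a z"
    using fin i0 by (rule sum_upd)
  also have "(\<Sum>i\<in>I. dotp m a (x i)) = dotp m a ?v" using fin by (rule dotp_sum[symmetric])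
  finally have eq: "dotp m a ?y = dotp m a ?v - dotp m a (x i0) + dotp m a z" .
  show ?thesis
  proof (rule ccontr)
    assume "\<not> ?thesis"
    hence "dotp m a ?y \<ge> dotp m a ?v" using eq by simp
    hence "?y \<in> face_dir m (msum I S) a" using yP \<open>?v \<in> face_dir m (msum I S) a\<close>
      unfolding face_dir_def by fastforce
    hence "?y = ?v" using face by auto
    moreover have "\<And>k. ?y k = ?v k - x i0 k + z k"
    proof -
      fix k
      have "?y k = (\<Sum>i\<in>I. ((\<lambda>i. x i k)(i0 := z k)) i)" by (rule sum.cong) auto
      also have "\<dots> = ?v k - x i0 k + z k" using fin i0 by (rule sum_upd)
      finally show "?y k = ?v k - x i0 k + z k" .
    qed
    ultimately have "\<And>k. z k = x i0 k" by (metis add_diff_cancel diff_add_cancel add.commute diff_diff_eq2 eq_diff_eq' right_minus_eq)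
    hence "z = x i0" by auto
    with zne show False by simp
  qed
qed

lemma face_from_uniq:
  assumes fin: "finite I" and xS: "\<forall>i\<in>I. x i \<in> S i"
    and um: "\<forall>i\<in>I. \<forall>z\<in>S i. z \<noteq> x i \<longrightarrow> dotp m b z < dotp m b (x i)"
  shows "face_dir m (msum I S) b = {(\<lambda>k. \<Sum>i\<in>I. x i k)}"
proof -
  let ?v = "\<lambda>k. \<Sum>i\<in>I. x i k"
  have vP: "?v \<in> msum I S" unfolding msum_def using xS by auto
  have main: "dotp m b y \<le> dotp m b ?v \<and> (y \<noteq> ?v \<longrightarrow> dotp m b y < dotp m b ?v)"
    if yPP: "y \<in> msum I S" for y
  proof -
    obtain yy where yy: "y = (\<lambda>k. \<Sum>i\<in>I. yy i k)" "\<forall>i\<in>I. yy i \<in> S i"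
      using yPP unfolding msum_def by blast
    have le: "\<And>i. i \<in> I \<Longrightarrow> dotp m b (yy i) \<le> dotp m b (x i)"
      using um yy(2) by (metis order.strict_implies_order order_refl)
    have dy: "dotp m b y = (\<Sum>i\<in>I. dotp m b (yy i))" unfolding yy(1) using fin by (rule dotp_sum)
    have dv: "dotp m b ?v = (\<Sum>i\<in>I. dotp m b (x i))" using fin by (rule dotp_sum)
    have 1: "dotp m b y \<le> dotp m b ?v" unfolding dy dv by (rule sum_mono) (rule le)
    have 2: "dotp m b y < dotp m b ?v" if ne: "y \<noteq> ?v"
    proof -
      have "\<exists>i\<in>I. yy i \<noteq> x i"
      proof (rule ccontr)
        assume "\<not> ?thesis"
        hence "y = ?v" using yy(1) by (auto intro!: sum.cong ext)
        with ne show False by simp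
      qed
      then obtain i where "i \<in> I" "yy i \<noteq> x i" by blast
      hence "dotp m b (yy i) < dotp m b (x i)" using um yy(2) by blast
      thus ?thesis unfolding dy dv using fin le \<open>i \<in> I\<close>
        by (intro sum_strict_mono_ex1) auto
    qed
    show ?thesis using 1 2 by blast
  qed
  show ?thesis unfolding face_dir_def using vP main by fastforce
qed


definition Ip :: "nat \<Rightarrow> (nat \<times> nat) set" where
  "Ip n = {(i, j). 1 \<le> i \<and> i < j \<and> j \<le> n}"
definition Av :: "nat \<Rightarrow> nat \<Rightarrow> nat \<Rightarrow> nat \<Rightarrow> real" where
  "Av n i j = (\<lambda>k. ebas i k + ebas (n + j) k)"
definition Bv :: "nat \<Rightarrow> nat \<Rightarrow> nat \<Rightarrow> nat \<Rightarrow> real" where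
  "Bv n i j = (\<lambda>k. ebas j k + ebas (n + i) k)"
definition SS :: "nat \<Rightarrow> nat \<times> nat \<Rightarrow> (nat \<Rightarrow> real) set" where
  "SS n = (\<lambda>(i, j). seg (Av n i j) (Bv n i j))"

lemma NewtU_eq: "NewtU n = msum (Ip n) (SS n)"
  unfolding NewtU_def Ip_def SS_def Av_def Bv_def ..

lemma fin_Ip: "finite (Ip n)"
proof -
  have "Ip n \<subseteq> {1..n} \<times> {1..n}" unfolding Ip_def by auto
  thus ?thesis by (rule finite_subset) auto
qed

lemma dotp_e1: "1 \<le> i \<Longrightarrow> i \<le> m \<Longrightarrow> dotp m a (ebas i) = a i"
proof -
  assume "1 \<le> i" "i \<le> m"
  have "dotp m a (ebas i) = (\<Sum>k=1..m. if i = k then a k else 0)"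
    unfolding dotp_def by (rule sum.cong) (auto simp: ebas_def)
  also have "\<dots> = a i" using \<open>1 \<le> i\<close> \<open>i \<le> m\<close> by (simp add: sum.delta')
  finally show ?thesis .
qed

lemma dotp_add: "dotp m a (\<lambda>k. x k + y k) = dotp m a x + dotp m a y"
  unfolding dotp_def by (simp add: distrib_left sum.distrib)

lemma dotp_e2: "1 \<le> i \<Longrightarrow> i \<le> m \<Longrightarrow> 1 \<le> l \<Longrightarrow> l \<le> m \<Longrightarrow>
   dotp m a (\<lambda>k. ebas i k + ebas l k) = a i + a l"
  by (simp add: dotp_add dotp_e1)

lemma seg_dot: assumes "z \<in> seg p q"
  shows "\<exists>t. 0 \<le> t \<and> t \<le> 1 \<and> z = (\<lambda>k. (1 - t) * p k + t * q k) \<and>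
     dotp m a z = (1 - t) * dotp m a p + t * dotp m a q"
proof -
  obtain t where t: "0 \<le> t" "t \<le> 1" "z = (\<lambda>k. (1 - t) * p k + t * q k)"
    using assms unfolding seg_def by blast
  have "dotp m a z = (1 - t) * dotp m a p + t * dotp m a q"
    unfolding t(3) dotp_def by (simp add: distrib_left sum.distrib sum_distrib_left mult.left_commute)
  thus ?thesis using t by blast
qed

lemma seg_ends: "p \<in> seg p q" "q \<in> seg p q"
proof -
  have "p = (\<lambda>k. (1 - 0) * p k + 0 * q k) \<and> 0 \<le> (0::real) \<and> (0::real) \<le> 1" by simp
  thus "p \<in> seg p q" unfolding seg_def by blast
  have "q = (\<lambda>k. (1 - 1) * p k + 1 * q k) \<and> 0 \<le> (1::real) \<and> (1::real) \<le> 1" by simp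
  thus "q \<in> seg p q" unfolding seg_def by blast
qed

lemma seg_max: assumes "p \<noteq> q" "x \<in> seg p q" "\<forall>z\<in>seg p q. z \<noteq> x \<longrightarrow> dotp m a z < dotp m a x"
  shows "(x = p \<and> dotp m a q < dotp m a p) \<or> (x = q \<and> dotp m a p < dotp m a q)"
proof -
  obtain t where t: "0 \<le> t" "t \<le> 1" "dotp m a x = (1 - t) * dotp m a p + t * dotp m a q"
    using seg_dot[OF assms(2)] by blast
  show ?thesis
  proof (cases "x = p")
    case True thus ?thesis using assms seg_ends by auto
  next
    case F: False
    show ?thesis
    proof (cases "x = q")
      case True thus ?thesis using assms seg_ends by auto
    next
      case False
      hence "dotp m a p < dotp m a x" "dotp m a q < dotp m a x" using F assms(3) seg_ends by auto
      hence False using t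
      proof -
        assume l: "dotp m a p < dotp m a x" "dotp m a q < dotp m a x"
        have "(1 - t) * dotp m a p \<le> (1 - t) * dotp m a x" using l t by (intro mult_left_mono) auto
        moreover have "t * dotp m a q \<le> t * dotp m a x" using l t by (intro mult_left_mono) auto
        moreover have "(1 - t) * dotp m a p < (1 - t) * dotp m a x \<or> t * dotp m a q < t * dotp m a x"
        proof (cases "t = 0")
          case True thus ?thesis using l by simp
        next
          case False thus ?thesis using l t by (intro disjI2 mult_strict_left_mono) auto
        qed
        ultimately have "dotp m a x < (1 - t) * dotp m a x + t * dotp m a x" using t(3) by linarith
        thus False by (simp add: algebra_simps)
      qed
      thus ?thesis ..
    qed
  qed
qed

lemma seg_uniq1: assumes "dotp m b q < dotp m b p"
  shows "\<forall>z\<in>seg p q. z \<noteq> p \<longrightarrow> dotp m b z < dotp m b p"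
proof (intro ballI impI)
  fix z assume z: "z \<in> seg p q" "z \<noteq> p"
  obtain t where t: "0 \<le> t" "t \<le> 1" "z = (\<lambda>k. (1 - t) * p k + t * q k)"
      "dotp m b z = (1 - t) * dotp m b p + t * dotp m b q"
    using seg_dot[OF z(1)] by blast
  have "t \<noteq> 0" using t(3) z(2) by auto
  hence "t > 0" using t by auto
  hence "t * dotp m b q < t * dotp m b p" using assms by simp
  thus "dotp m b z < dotp m b p" using t(4) by (simp add: algebra_simps)
qed

lemma seg_uniq2: assumes "dotp m b p < dotp m b q"
  shows "\<forall>z\<in>seg p q. z \<noteq> q \<longrightarrow> dotp m b z < dotp m b q"
proof (intro ballI impI)
  fix z assume z: "z \<in> seg p q" "z \<noteq> q"
  obtain t where t: "0 \<le> t" "t \<le> 1" "z = (\<lambda>k. (1 - t) * p k + t * q k)"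
      "dotp m b z = (1 - t) * dotp m b p + t * dotp m b q"
    using seg_dot[OF z(1)] by blast
  have "t \<noteq> 1" using t(3) z(2) by auto
  hence "1 - t > 0" using t by auto
  hence "(1 - t) * dotp m b p < (1 - t) * dotp m b q" using assms by simp
  thus "dotp m b z < dotp m b q" using t(4) by (simp add: algebra_simps)
qed


lemma main_aux:
  fixes n :: nat and v :: "nat \<Rightarrow> real"
  assumes "1 \<le> n"
    and "is_vertex (2 * n) (NewtU n) v"
  shows "v \<in> normal_cone (2 * n) (NewtU n) {v}"
proof -
  obtain a where aR: "a \<in> Rsp (2*n)" and af: "face_dir (2*n) (NewtU n) a = {v}"
    using assms(2) unfolding is_vertex_def by blast
  have "v \<in> NewtU n" using af unfolding face_dir_def by auto
  then obtain x where vx: "v = (\<lambda>k. \<Sum>p\<in>Ip n. x p k)" and xS: "\<forall>p\<in>Ip n. x p \<in> SS n p"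
    unfolding NewtU_eq msum_def by blast
  define c where "c k = a k - a (n+k)" for k
  have key: "(x (i,j) = Av n i j \<and> c j < c i) \<or> (x (i,j) = Bv n i j \<and> c i < c j)"
    if ij: "(i,j) \<in> Ip n" for i j
  proof -
    have bnd: "1 \<le> i" "i < j" "j \<le> n" using ij unfolding Ip_def by auto
    have ne: "Av n i j \<noteq> Bv n i j"
    proof
      assume "Av n i j = Bv n i j"
      hence "Av n i j i = Bv n i j i" by simp
      thus False using bnd unfolding Av_def Bv_def ebas_def by simp
    qed
    have af': "face_dir (2*n) (msum (Ip n) (SS n)) a = {(\<lambda>k. \<Sum>p\<in>Ip n. x p k)}"
      using af vx NewtU_eq by simp
    have um: "\<forall>z\<in>seg (Av n i j) (Bv n i j). z \<noteq> x (i,j) \<longrightarrow> dotp (2*n) a z < dotp (2*n) a (x (i,j))"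
      using uniq_max[OF fin_Ip xS af' ij] by (simp add: SS_def)
    have xs: "x (i,j) \<in> seg (Av n i j) (Bv n i j)" using xS ij by (auto simp add: SS_def)
    have dA: "dotp (2*n) a (Av n i j) = a i + a (n+j)" unfolding Av_def using bnd by (intro dotp_e2) auto
    have dB: "dotp (2*n) a (Bv n i j) = a j + a (n+i)" unfolding Bv_def using bnd by (intro dotp_e2) auto
    from seg_max[OF ne xs um] show ?thesis unfolding dA dB c_def by auto
  qed
  define w where "w p = (if c (snd p) < c (fst p) then Av n (fst p) (snd p) else Bv n (fst p) (snd p))" for p
  have cne: "c i \<noteq> c j" if "(i,j) \<in> Ip n" for i j using key[OF that] by auto
  have xw: "x p = w p" if "p \<in> Ip n" for p
  proof -
    obtain i j where pij: "p = (i,j)" by (cases p)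
    show ?thesis using key[of i j] that unfolding pij w_def by auto
  qed
  have wS: "\<forall>p\<in>Ip n. w p \<in> SS n p" using xS xw by auto
  have vw: "v = (\<lambda>k. \<Sum>p\<in>Ip n. w p k)" unfolding vx by (intro ext sum.cong) (auto simp: xw)
  have dk: "v k - v (n+k) = (\<Sum>l\<in>{1..n}. sgn (c k - c l))" if k: "1 \<le> k" "k \<le> n" for k
  proof -
    let ?g = "\<lambda>l. sgn (c k - c l)"
    have "v k - v (n+k) = (\<Sum>p\<in>Ip n. w p k - w p (n+k))" unfolding vw by (simp add: sum_subtractf)
    also have "\<dots> = (\<Sum>p\<in>Ip n. (if fst p = k then ?g (snd p) else 0) + (if snd p = k then ?g (fst p) else 0))"
    proof (rule sum.cong[OF refl])
      fix p assume p: "p \<in> Ip n"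
      obtain i j where pij: "p = (i,j)" by (cases p)
      have bnd: "1 \<le> i" "i < j" "j \<le> n" using p pij unfolding Ip_def by auto
      have "c i \<noteq> c j" using cne p pij by auto
      have A1: "Av n i j k = (if k = i then 1 else 0)" and A2: "Av n i j (n+k) = (if k = j then 1 else 0)"
        and B1: "Bv n i j k = (if k = j then 1 else 0)" and B2: "Bv n i j (n+k) = (if k = i then 1 else 0)"
        unfolding Av_def Bv_def ebas_def using bnd k by auto
      have ij: "i \<noteq> j" using bnd by simp
      show "w p k - w p (n+k) = (if fst p = k then ?g (snd p) else 0) + (if snd p = k then ?g (fst p) else 0)"
      proof (cases "c j < c i")
        case True
        have wp: "w p = Av n i j" unfolding pij w_def using True by simp
        have s1: "sgn (c i - c j) = 1" "sgn (c j - c i) = -1" using True by (auto simp: sgn_if)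
        show ?thesis unfolding wp unfolding pij fst_conv snd_conv A1 A2
          using ij s1 by (cases "k = i"; cases "k = j") auto
      next
        case False
        hence lt: "c i < c j" using \<open>c i \<noteq> c j\<close> by simp
        have wp: "w p = Bv n i j" unfolding pij w_def using False by simp
        have s1: "sgn (c i - c j) = -1" "sgn (c j - c i) = 1" using lt by (auto simp: sgn_if)
        show ?thesis unfolding wp unfolding pij fst_conv snd_conv B1 B2
          using ij s1 by (cases "k = i"; cases "k = j") auto
      qed
    qed
    also have "\<dots> = (\<Sum>p\<in>Ip n. if fst p = k then ?g (snd p) else 0) + (\<Sum>p\<in>Ip n. if snd p = k then ?g (fst p) else 0)"
      by (rule sum.distrib)
    also have "(\<Sum>p\<in>Ip n. if fst p = k then ?g (snd p) else 0) = (\<Sum>l\<in>{k<..n}. ?g l)"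
    proof -
      have "(\<Sum>p\<in>Ip n. if fst p = k then ?g (snd p) else 0) = (\<Sum>p\<in>{p\<in>Ip n. fst p = k}. ?g (snd p))"
        by (rule sum.inter_filter[OF fin_Ip, symmetric])
      also have "{p\<in>Ip n. fst p = k} = (\<lambda>l. (k,l)) ` {k<..n}" using k unfolding Ip_def by auto
      also have "(\<Sum>p\<in>(\<lambda>l. (k,l)) ` {k<..n}. ?g (snd p)) = (\<Sum>l\<in>{k<..n}. ?g l)"
        by (subst sum.reindex) (auto simp: inj_on_def)
      finally show ?thesis .
    qed
    also have "(\<Sum>p\<in>Ip n. if snd p = k then ?g (fst p) else 0) = (\<Sum>l\<in>{1..<k}. ?g l)"
    proof -
      have "(\<Sum>p\<in>Ip n. if snd p = k then ?g (fst p) else 0) = (\<Sum>p\<in>{p\<in>Ip n. snd p = k}. ?g (fst p))"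
        by (rule sum.inter_filter[OF fin_Ip, symmetric])
      also have "{p\<in>Ip n. snd p = k} = (\<lambda>l. (l,k)) ` {1..<k}" using k unfolding Ip_def by auto
      also have "(\<Sum>p\<in>(\<lambda>l. (l,k)) ` {1..<k}. ?g (fst p)) = (\<Sum>l\<in>{1..<k}. ?g l)"
        by (subst sum.reindex) (auto simp: inj_on_def)
      finally show ?thesis .
    qed
    also have "(\<Sum>l\<in>{k<..n}. ?g l) + (\<Sum>l\<in>{1..<k}. ?g l) = (\<Sum>l\<in>{1..n}. ?g l)"
    proof -
      have e: "{1..n} = insert k ({1..<k} \<union> {k<..n})" using k by auto
      have "(\<Sum>l\<in>{1..n}. ?g l) = ?g k + (\<Sum>l\<in>{1..<k} \<union> {k<..n}. ?g l)"
        unfolding e by (subst sum.insert) auto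
      also have "(\<Sum>l\<in>{1..<k} \<union> {k<..n}. ?g l) = (\<Sum>l\<in>{1..<k}. ?g l) + (\<Sum>l\<in>{k<..n}. ?g l)"
        by (rule sum.union_disjoint) auto
      finally show ?thesis by simp
    qed
    finally show ?thesis .
  qed
  have dmono: "(\<Sum>l\<in>{1..n}. sgn (c j - c l)) < (\<Sum>l\<in>{1..n}. sgn (c i - c l))"
    if "c j < c i" "1 \<le> i" "i \<le> n" for i j
  proof (rule sum_strict_mono_ex1)
    show "finite {1..n}" by simp
    show "\<forall>l\<in>{1..n}. sgn (c j - c l) \<le> sgn (c i - c l)" using that by (auto simp: sgn_if)
    show "\<exists>l\<in>{1..n}. sgn (c j - c l) < sgn (c i - c l)"
      using that by (intro bexI[of _ i]) (auto simp: sgn_if)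
  qed
  have um2: "\<forall>p\<in>Ip n. \<forall>z\<in>SS n p. z \<noteq> w p \<longrightarrow> dotp (2*n) v z < dotp (2*n) v (w p)"
  proof
    fix p assume p: "p \<in> Ip n"
    obtain i j where pij: "p = (i,j)" by (cases p)
    have bnd: "1 \<le> i" "i < j" "j \<le> n" using p pij unfolding Ip_def by auto
    have dA: "dotp (2*n) v (Av n i j) = v i + v (n+j)" unfolding Av_def using bnd by (intro dotp_e2) auto
    have dB: "dotp (2*n) v (Bv n i j) = v j + v (n+i)" unfolding Bv_def using bnd by (intro dotp_e2) auto
    show "\<forall>z\<in>SS n p. z \<noteq> w p \<longrightarrow> dotp (2*n) v z < dotp (2*n) v (w p)"
    proof (cases "c j < c i")
      case True
      have "v j - v (n+j) < v i - v (n+i)"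
        using dk[of i] dk[of j] dmono[OF True] bnd by simp
      hence "dotp (2*n) v (Bv n i j) < dotp (2*n) v (Av n i j)" unfolding dA dB by simp
      from seg_uniq1[OF this] show ?thesis unfolding pij SS_def w_def using True by simp
    next
      case False
      hence lt: "c i < c j" using cne[of i j] p pij by auto
      have "v i - v (n+i) < v j - v (n+j)"
        using dk[of i] dk[of j] dmono[OF lt] bnd by simp
      hence "dotp (2*n) v (Av n i j) < dotp (2*n) v (Bv n i j)" unfolding dA dB by simp
      from seg_uniq2[OF this] show ?thesis unfolding pij SS_def w_def using False by simp
    qed
  qed
  have "face_dir (2*n) (msum (Ip n) (SS n)) v = {(\<lambda>k. \<Sum>p\<in>Ip n. w p k)}"
    by (rule face_from_uniq[OF fin_Ip wS um2])
  hence face: "face_dir (2*n) (NewtU n) v = {v}" unfolding NewtU_eq using vw[symmetric] by simp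
  have vR: "v \<in> Rsp (2*n)"
    unfolding Rsp_def
  proof (intro CollectI allI impI)
    fix k assume k: "k < 1 \<or> 2 * n < k"
    have "v k = (\<Sum>p\<in>Ip n. w p k)" using vw by simp
    also have "\<dots> = (\<Sum>p\<in>Ip n. 0)"
    proof (rule sum.cong[OF refl])
      fix p assume p: "p \<in> Ip n"
      obtain i j where pij: "p = (i,j)" by (cases p)
      have bnd: "1 \<le> i" "i < j" "j \<le> n" using p pij unfolding Ip_def by auto
      show "w p k = 0" unfolding pij w_def Av_def Bv_def ebas_def using bnd k by auto
    qed
    finally show "v k = 0" by simp
  qed
  show ?thesis unfolding normal_cone_def using vR face by simp
qed


theorem mainTheorem5:
  fixes n :: nat and v :: "nat \<Rightarrow> real"
  assumes "1 \<le> n"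
    and "is_vertex (2 * n) (NewtU n) v"
  shows "v \<in> normal_cone (2 * n) (NewtU n) {v}"
  using assms by (rule main_aux)

thm_deps mainTheorem5

end
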